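(* Let $n$ be a positive integer and let $P_n$ denote the path on $n$ vertices. Then $P_n$ is super edge-graceful if and only if $n \neq 2$ and $n \neq 4$.
   Context: All graphs are simple, finite and undirected. Let $G=(V,E)$ be a graph with $p=|V|$ vertices and $q=|E|$ edges. An edge labeling $f$ is a bijection $f:E\to\{0,\pm1,\pm2,\ldots,\pm\frac{q-1}{2}\}$ if $q$ is odd, and $f:E\to\{\pm1,\pm2,\ldots,\pm\frac{q}{2}\}$ if $q$ is even. For each vertex $x\in V$, the induced vertex label is $f^*(x)=\sum_{xy\in E}f(xy)$, the sum over all edges incident with $x$. The labeling $f$ is super edge-graceful if $f^*$ is a bijection from $V$ onto $\{0,\pm1,\pm2,\ldots,\pm\frac{p-1}{2}\}$ when $p$ is odd, and onto $\{\pm1,\pm2,\ldots,\pm\frac{p}{2}\}$ when $p$ is even. A graph is super edge-graceful if it admits a super edge-graceful labeling. *)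

theory Defs
  imports Main
begin

definition sym_label_set :: "nat \<Rightarrow> int set" where
  "sym_label_set m =
     (if odd m then {- ((int m - 1) div 2) .. (int m - 1) div 2}
      else {- (int m div 2) .. int m div 2} - {0})"

definition vertex_sum :: "'a set set \<Rightarrow> ('a set \<Rightarrow> int) \<Rightarrow> 'a \<Rightarrow> int" where
  "vertex_sum E f x = (\<Sum>e\<in>{e\<in>E. x \<in> e}. f e)"

definition super_edge_graceful_labeling :: "'a set \<Rightarrow> 'a set set \<Rightarrow> ('a set \<Rightarrow> int) \<Rightarrow> bool" where
  "super_edge_graceful_labeling V E f \<longleftrightarrow>
     bij_betw f E (sym_label_set (card E)) \<and>
     bij_betw (vertex_sum E f) V (sym_label_set (card V))"

definition super_edge_graceful :: "'a set \<Rightarrow> 'a set set \<Rightarrow> bool" where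
  "super_edge_graceful V E \<longleftrightarrow> (\<exists>f. super_edge_graceful_labeling V E f)"

definition path_vertices :: "nat \<Rightarrow> nat set" where
  "path_vertices n = {0..<n}"

definition path_edges :: "nat \<Rightarrow> nat set set" where
  "path_edges n = {{i, Suc i} | i. Suc i < n}"

end

theory Submission imports Defs begin

lemma card_sym: "card (sym_label_set m) = m"
proof (cases "odd m")
  case True
  then obtain k where m: "m = 2*k+1" by (metis oddE)
  have "(int m - 1) div 2 = int k" using m by simp
  then show ?thesis using True m by (simp add: sym_label_set_def)
next
  case False
  then obtain k where m: "m = 2*k" by blast
  have "int m div 2 = int k" using m by simp
  moreover have "card ({- int k..int k} - {0}) = 2*k"
    by (simp add: card_Diff_singleton)
  ultimately show ?thesis using False m by (simp add: sym_label_set_def)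
qed

lemma finite_sym: "finite (sym_label_set m)"
  by (simp add: sym_label_set_def)

lemma bij_from_inj:
  assumes "inj_on a A" "a ` A \<subseteq> B" "finite B" "card A = card B"
  shows "bij_betw a A B"
  using assms by (metis bij_betw_def card_image card_subset_eq)

lemma min_edge: "Min {i, Suc i} = i" by simp

lemma bij_min: "bij_betw Min (path_edges n) {0..<n-1}"
proof -
  have e: "path_edges n = (\<lambda>i. {i, Suc i}) ` {0..<n-1}"
    unfolding path_edges_def by (auto simp: image_def)
  have inj: "inj_on (\<lambda>i. {i, Suc i}) {0..<n-1}"
    by (auto simp: inj_on_def doubleton_eq_iff)
  have "bij_betw (\<lambda>i. {i, Suc i}) {0..<n-1} (path_edges n)"
    using inj e by (simp add: bij_betw_def)
  from bij_betw_inv_into[OF this] have b: "bij_betw (inv_into {0..<n-1} (\<lambda>i. {i, Suc i})) (path_edges n) {0..<n-1}" .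
  have "\<And>e. e \<in> path_edges n \<Longrightarrow> inv_into {0..<n-1} (\<lambda>i. {i, Suc i}) e = Min e"
    using inj unfolding e
    by (auto, metis (no_types, lifting) atLeastLessThan_iff inv_into_f_f zero_le)
  then show ?thesis using b bij_betw_cong by blast
qed

lemma card_edges: "card (path_edges n) = n - 1"
  using bij_betw_same_card[OF bij_min] by simp

lemma inc_edges:
  assumes "x < n"
  shows "{e \<in> path_edges n. x \<in> e} =
     (if 0 < x then {{x-1, x}} else {}) \<union> (if Suc x < n then {{x, Suc x}} else {})" (is "_ = ?R")
proof
  show "{e \<in> path_edges n. x \<in> e} \<subseteq> ?R"
  proof
    fix e assume "e \<in> {e \<in> path_edges n. x \<in> e}"
    then obtain i where e: "e = {i, Suc i}" "Suc i < n" "x \<in> e" unfolding path_edges_def by blast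
    then have "x = i \<or> x = Suc i" by auto
    then show "e \<in> ?R" using e by auto
  qed
next
  show "?R \<subseteq> {e \<in> path_edges n. x \<in> e}"
    using assms unfolding path_edges_def by (auto split: if_splits)
qed

lemma vsum:
  assumes "x < n"
  shows "vertex_sum (path_edges n) (\<lambda>e. a (Min e)) x =
     (if 0 < x then a (x-1) else 0) + (if Suc x < n then a x else 0)"
proof -
  have d: "0 < x \<Longrightarrow> {x-1,x} \<noteq> {x, Suc x}" by (auto simp: doubleton_eq_iff)
  have m1: "0 < x \<Longrightarrow> Min {x-1, x} = x - 1" by (simp add: min_def)
  show ?thesis unfolding vertex_sum_def inc_edges[OF assms]
    using d m1 by (auto simp: sum.union_disjoint)
qed

lemma seg_from_seq:
  assumes "bij_betw a {0..<n-1} (sym_label_set (n-1))"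
   "bij_betw (\<lambda>x. (if 0<x then a (x-1) else 0) + (if Suc x < n then a x else 0)) {0..<n} (sym_label_set n)"
  shows "super_edge_graceful (path_vertices n) (path_edges n)"
proof -
  have b1: "bij_betw (\<lambda>e. a (Min e)) (path_edges n) (sym_label_set (card (path_edges n)))"
  proof -
    have "bij_betw (a \<circ> Min) (path_edges n) (sym_label_set (n-1))" by (rule bij_betw_trans[OF bij_min assms(1)])
    then show ?thesis unfolding card_edges o_def .
  qed
  have b2: "bij_betw (vertex_sum (path_edges n) (\<lambda>e. a (Min e))) (path_vertices n) (sym_label_set (card (path_vertices n)))"
  proof -
    have "bij_betw (vertex_sum (path_edges n) (\<lambda>e. a (Min e))) {0..<n} (sym_label_set n)"
      using assms(2) by (rule bij_betw_cong[THEN iffD2, rotated]) (simp add: vsum)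
    then show ?thesis unfolding path_vertices_def by simp
  qed
  show ?thesis unfolding super_edge_graceful_def super_edge_graceful_labeling_def
    using b1 b2 by blast
qed

lemma sym_even: "sym_label_set (2*k) = {- int k..int k} - {0}"
  by (simp add: sym_label_set_def)
lemma sym_odd: "sym_label_set (2*k+1) = {- int k..int k}"
  by (simp add: sym_label_set_def)

lemma par_cases: fixes i :: nat obtains u where "i = 2*u" | u where "i = 2*u+1"
  by (metis oddE evenE)

lemma fam_odd: "super_edge_graceful (path_vertices (2*k+1)) (path_edges (2*k+1))"
proof -
  define a where "a i = (if even i then int (i div 2) - int k else int (i div 2) + 1)" for i
  define v where "v x = int x - int k" for x
  have A: "bij_betw a {0..<2*k} (sym_label_set (2*k))"
  proof (rule bij_from_inj)
    show "inj_on a {0..<2*k}" unfolding inj_on_def a_def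
      apply (intro ballI impI)
      subgoal for i j by (rule par_cases[of i]; rule par_cases[of j]) auto
      done
    show "a ` {0..<2*k} \<subseteq> sym_label_set (2*k)" unfolding sym_even a_def
      apply (intro subsetI, elim imageE)
      subgoal for y i by (rule par_cases[of i]) auto
      done
  qed (auto simp: finite_sym card_sym)
  have V: "bij_betw v {0..<2*k+1} (sym_label_set (2*k+1))"
  proof (rule bij_from_inj)
    show "inj_on v {0..<2*k+1}" unfolding inj_on_def v_def by simp
    show "v ` {0..<2*k+1} \<subseteq> sym_label_set (2*k+1)" unfolding sym_odd v_def by auto
  qed (auto simp: finite_sym card_sym)
  have E: "(if 0<x then a (x-1) else 0) + (if Suc x < 2*k+1 then a x else 0) = v x"
    if "x \<in> {0..<2*k+1}" for x
  proof (cases x)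
    case 0 then show ?thesis using that by (auto simp: a_def v_def)
  next
    case (Suc y) then show ?thesis using that
      by (rule_tac par_cases[of y]) (auto simp: a_def v_def)
  qed
  have V': "bij_betw (\<lambda>x. (if 0<x then a (x-1) else 0) + (if Suc x < 2*k+1 then a x else 0)) {0..<2*k+1} (sym_label_set (2*k+1))"
    using V E by (rule bij_betw_cong[THEN iffD2, rotated])
  show ?thesis by (rule seg_from_seq) (use A V' in simp_all)
qed

lemma fam_e0:
  assumes k: "2 \<le> k"
  shows "super_edge_graceful (path_vertices (4*k)) (path_edges (4*k))"
proof -
  define a where "a i = (if even i then (if i div 2 \<le> k then int (i div 2) - 1 else int (i div 2) - (2*int k+1))
                 else (if i div 2 + 2 \<le> k then int (i div 2) - (2*int k - 1) else int (i div 2) + 1))" for i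
  define v where "v x = (if x = 0 then -1 else if x = 4*k-1 then -2 else if 2*k-1 \<le> x \<and> x \<le> 2*k+1 then int x - 1 else int x - (2*int k+1))" for x
  have Sq: "sym_label_set (4*k-1) = {-(2*int k - 1)..2*int k - 1}"
  proof -
    have e: "4*k-1 = 2*(2*k-1)+1" using k by simp
    have i: "int (2*k-1) = 2*int k - 1" using k by simp
    show ?thesis unfolding e sym_odd i by simp
  qed
  have Sn: "sym_label_set (4*k) = {-(2*int k)..2*int k} - {0}"
    using sym_even[of "2*k"] by simp
  have A: "bij_betw a {0..<4*k-1} (sym_label_set (4*k-1))"
  proof (rule bij_from_inj)
    show "inj_on a {0..<4*k-1}" unfolding inj_on_def a_def
      apply (intro ballI impI)
      subgoal for i j by (rule par_cases[of i]; rule par_cases[of j]) (auto split: if_splits)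
      done
    show "a ` {0..<4*k-1} \<subseteq> sym_label_set (4*k-1)" unfolding Sq a_def
      apply (intro subsetI, elim imageE)
      subgoal for y i by (rule par_cases[of i]) (use k in \<open>auto split: if_splits\<close>)
      done
  qed (auto simp: finite_sym card_sym)
  have V: "bij_betw v {0..<4*k} (sym_label_set (4*k))"
  proof (rule bij_from_inj)
    show "inj_on v {0..<4*k}" unfolding inj_on_def v_def using k by (auto split: if_splits)
    show "v ` {0..<4*k} \<subseteq> sym_label_set (4*k)" unfolding Sn v_def using k by (auto split: if_splits)
  qed (auto simp: finite_sym card_sym)
  have pk: "Suc (Suc (Suc (2*u))) < 4*k \<longleftrightarrow> Suc (Suc (2*u)) < 4*k" for u by presburger
  have pk2: "Suc (Suc (2*u)) \<noteq> 4*k - Suc 0" "2*u \<noteq> 4*k - Suc 0" for u using k by presburger+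
  have E: "(if 0<x then a (x-1) else 0) + (if Suc x < 4*k then a x else 0) = v x"
    if "x \<in> {0..<4*k}" for x
  proof (cases x)
    case 0 then show ?thesis using that k by (auto simp: a_def v_def)
  next
    case (Suc y) then show ?thesis using that
      by (rule_tac par_cases[of y]) (use k in \<open>auto simp: a_def v_def pk pk2 split: if_splits\<close>)
  qed
  have V': "bij_betw (\<lambda>x. (if 0<x then a (x-1) else 0) + (if Suc x < 4*k then a x else 0)) {0..<4*k} (sym_label_set (4*k))"
    using V E by (rule bij_betw_cong[THEN iffD2, rotated])
  show ?thesis by (rule seg_from_seq) (use A V' in simp_all)
qed

lemma fam_e1:
  assumes k: "1 \<le> k"
  shows "super_edge_graceful (path_vertices (4*k+2)) (path_edges (4*k+2))"
proof -
  define a where "a i = (if even i then (if i div 2 < k then int (i div 2) - 2*int k else int (i div 2) - (2*int k - 1))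
                 else (if i div 2 + 1 < k then int (i div 2) + 2 else if i div 2 + 1 = k then - int k else int (i div 2) + 1))" for i
  define v where "v x = (if x = 0 then -2*int k else if x = 4*k+1 then 1 else if x = 2*k-1 then -(2*int k+1)
      else if x = 2*k then -(2*int k - 1) else int x - (2*int k - 1))" for x
  have Sq: "sym_label_set (4*k+2-1) = {-(2*int k)..2*int k}"
    using sym_odd[of "2*k"] by simp
  have Sn: "sym_label_set (4*k+2) = {-(2*int k+1)..2*int k+1} - {0}"
    using sym_even[of "2*k+1"] by (simp add: algebra_simps)
  have A: "bij_betw a {0..<4*k+2-1} (sym_label_set (4*k+2-1))"
  proof (rule bij_from_inj)
    show "inj_on a {0..<4*k+2-1}" unfolding inj_on_def a_def
      apply (intro ballI impI)
      subgoal for i j by (rule par_cases[of i]; rule par_cases[of j]) (use k in \<open>auto split: if_splits\<close>)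
      done
    show "a ` {0..<4*k+2-1} \<subseteq> sym_label_set (4*k+2-1)" unfolding Sq a_def
      apply (intro subsetI, elim imageE)
      subgoal for y i by (rule par_cases[of i]) (use k in \<open>auto split: if_splits\<close>)
      done
  qed (auto simp: finite_sym card_sym)
  have V: "bij_betw v {0..<4*k+2} (sym_label_set (4*k+2))"
  proof (rule bij_from_inj)
    show "inj_on v {0..<4*k+2}" unfolding inj_on_def v_def using k by (auto split: if_splits)
    show "v ` {0..<4*k+2} \<subseteq> sym_label_set (4*k+2)" unfolding Sn v_def using k by (auto split: if_splits)
  qed (auto simp: finite_sym card_sym)
  have pk: "Suc (Suc (Suc (2*u))) < 4*k+2 \<longleftrightarrow> Suc (Suc (2*u)) < 4*k+2" for u by presburger
  have pk2: "Suc (Suc (2*u)) \<noteq> 4*k+1" "2*u \<noteq> 4*k+1" "2*u+1 \<noteq> 2*k" "2*u \<noteq> 2*k-1" "Suc (Suc (2*u)) \<noteq> 2*k - 1" for u using k by presburger+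
  have E: "(if 0<x then a (x-1) else 0) + (if Suc x < 4*k+2 then a x else 0) = v x"
    if "x \<in> {0..<4*k+2}" for x
  proof (cases x)
    case 0 then show ?thesis using that k by (auto simp: a_def v_def)
  next
    case (Suc y) then show ?thesis using that
      by (rule_tac par_cases[of y]) (use k in \<open>auto simp: a_def v_def pk pk2 split: if_splits\<close>)
  qed
  have V': "bij_betw (\<lambda>x. (if 0<x then a (x-1) else 0) + (if Suc x < 4*k+2 then a x else 0)) {0..<4*k+2} (sym_label_set (4*k+2))"
    using V E by (rule bij_betw_cong[THEN iffD2, rotated])
  show ?thesis by (rule seg_from_seq) (use A V' in simp_all)
qed

lemma vsum_gen:
  assumes "x < n"
  shows "vertex_sum (path_edges n) f x =
     (if 0 < x then f {x-1, x} else 0) + (if Suc x < n then f {x, Suc x} else 0)"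
proof -
  have d: "0 < x \<Longrightarrow> {x-1,x} \<noteq> {x, Suc x}" by (auto simp: doubleton_eq_iff)
  show ?thesis unfolding vertex_sum_def inc_edges[OF assms]
    using d by (auto simp: sum.union_disjoint)
qed

lemma not2: "\<not> super_edge_graceful (path_vertices 2) (path_edges 2)"
proof
  assume "super_edge_graceful (path_vertices 2) (path_edges 2)"
  then obtain f where "bij_betw (vertex_sum (path_edges 2) f) (path_vertices 2) (sym_label_set (card (path_vertices 2)))"
    unfolding super_edge_graceful_def super_edge_graceful_labeling_def by blast
  then have "inj_on (vertex_sum (path_edges 2) f) {0..<2}" unfolding path_vertices_def bij_betw_def by blast
  moreover have "vertex_sum (path_edges 2) f 0 = vertex_sum (path_edges 2) f 1"
    by (simp add: vsum_gen)
  ultimately show False unfolding inj_on_def by force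
qed

lemma not4: "\<not> super_edge_graceful (path_vertices 4) (path_edges 4)"
proof
  assume "super_edge_graceful (path_vertices 4) (path_edges 4)"
  then obtain f where bf: "bij_betw f (path_edges 4) (sym_label_set (card (path_edges 4)))"
    and bv: "bij_betw (vertex_sum (path_edges 4) f) (path_vertices 4) (sym_label_set (card (path_vertices 4)))"
    unfolding super_edge_graceful_def super_edge_graceful_labeling_def by blast
  have S3: "sym_label_set 3 = {-1..1}" using sym_odd[of 1] by simp
  have S4: "sym_label_set 4 = {-2..2} - {0}" using sym_even[of 2] by simp
  have "0 \<in> f ` path_edges 4" using bf S3 unfolding bij_betw_def card_edges by simp
  then obtain i where i: "i < 3" "f {i, Suc i} = 0" unfolding path_edges_def by auto
  have inj: "inj_on (vertex_sum (path_edges 4) f) {0..<4}" using bv unfolding path_vertices_def bij_betw_def by blast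
  have im: "vertex_sum (path_edges 4) f x \<noteq> 0" if "x < 4" for x
  proof -
    have "vertex_sum (path_edges 4) f x \<in> sym_label_set 4"
      using bv that unfolding path_vertices_def bij_betw_def by auto
    then show ?thesis unfolding S4 by auto
  qed
  have v0: "vertex_sum (path_edges 4) f 0 = f {0,1}" by (simp add: vsum_gen)
  have v1: "vertex_sum (path_edges 4) f 1 = f {0,1} + f {1,2}" by (simp add: vsum_gen numeral_2_eq_2)
  have v3: "vertex_sum (path_edges 4) f 3 = f {2,3}" by (simp add: vsum_gen)
  have "i = 0 \<or> i = 1 \<or> i = 2" using i by auto
  then show False
  proof (elim disjE)
    assume "i = 0" then show False using i v0 im[of 0] by simp
  next
    assume "i = 2" then show False using i v3 im[of 3] by (simp add: numeral_eq_Suc)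
  next
    assume "i = 1" then have "vertex_sum (path_edges 4) f 0 = vertex_sum (path_edges 4) f 1"
      using i v0 v1 by (simp add: numeral_eq_Suc)
    then show False using inj unfolding inj_on_def by force
  qed
qed

theorem theorem1:
  fixes n :: nat
  assumes "n \<ge> 1"
  shows "super_edge_graceful (path_vertices n) (path_edges n) \<longleftrightarrow> n \<noteq> 2 \<and> n \<noteq> 4"
proof
  assume "super_edge_graceful (path_vertices n) (path_edges n)"
  then show "n \<noteq> 2 \<and> n \<noteq> 4" using not2 not4 by auto
next
  assume n: "n \<noteq> 2 \<and> n \<noteq> 4"
  consider (o) k where "n = 2*k+1" | (e0) k where "n = 4*k" "2 \<le> k" | (e1) k where "n = 4*k+2" "1 \<le> k"
  proof -
    have "(\<exists>k. n = 2*k+1) \<or> (\<exists>k. n = 4*k \<and> 2 \<le> k) \<or> (\<exists>k. n = 4*k+2 \<and> 1 \<le> k)"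
      using n assms by presburger
    then show ?thesis using that by blast
  qed
  then show "super_edge_graceful (path_vertices n) (path_edges n)"
  proof cases
    case o then show ?thesis using fam_odd by simp
  next
    case e0 then show ?thesis using fam_e0 by simp
  next
    case e1 then show ?thesis using fam_e1 by simp
  qed
qed

end
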